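(* Let $\beta:\mathcal{U}^{(1)}\to\mathbb{C}[[X]]$ be a continuous linear map. Then there is a continuous unital algebra homomorphism $\bar\beta:\mathcal{U}\to\mathbb{C}[[X]]$ extending $\beta$.
   Context: Let $S$ be the set of finitely supported sequences $r=(r_1,r_2,\dots)$ of nonnegative integers, $|r|=\sum_i r_i$, $X^r=\prod_iX_i^{r_i}$ in commuting indeterminates. $\mathcal{U}$ is the commutative unital Fréchet algebra of formal power series $f=\sum_{r\in S}\alpha_rX^r$ with $q_m(f)=\sum_r|\alpha_r|m^{|r|}<\infty$ for all $m\in\mathbb{N}$, topologized by the norms $(q_m)$. $\mathcal{U}^{(1)}$ is the closed linear subspace of $\mathcal{U}$ of homogeneous linear series $\sum_{i}\alpha_iX_i$ (with $\sum_i|\alpha_i|<\infty$), with the relative topology. $\mathbb{C}[[X]]$ is the algebra of formal power series in one indeterminate with the Fréchet topology of coordinatewise convergence. *)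

theory Defs
  imports "HOL-Analysis.Analysis" "HOL-Computational_Algebra.Formal_Power_Series"
begin

definition fsupp_seqs :: "(nat \<Rightarrow> nat) set" where
  "fsupp_seqs = {r. finite {i. r i \<noteq> 0}}"

definition msize :: "(nat \<Rightarrow> nat) \<Rightarrow> nat" where
  "msize r = sum r {i. r i \<noteq> 0}"

text \<open>A formal power series in X_1, X_2, ... is represented by its coefficient
  function alpha, with alpha r the coefficient of X^r (zero off fsupp_seqs).\<close>
type_synonym mseries = "(nat \<Rightarrow> nat) \<Rightarrow> complex"

definition qnorm :: "nat \<Rightarrow> mseries \<Rightarrow> real" where
  "qnorm m f = infsum (\<lambda>r. norm (f r) * real m ^ msize r) fsupp_seqs"

definition U_alg :: "mseries set" where
  "U_alg = {f. (\<forall>r. r \<notin> fsupp_seqs \<longrightarrow> f r = 0) \<and>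
               (\<forall>m::nat. (\<lambda>r. norm (f r) * real m ^ msize r) summable_on fsupp_seqs)}"

definition U_lin :: "mseries set" where
  "U_lin = {f \<in> U_alg. \<forall>r. msize r \<noteq> 1 \<longrightarrow> f r = 0}"

definition ms_add :: "mseries \<Rightarrow> mseries \<Rightarrow> mseries" where
  "ms_add f g = (\<lambda>r. f r + g r)"

definition ms_scale :: "complex \<Rightarrow> mseries \<Rightarrow> mseries" where
  "ms_scale c f = (\<lambda>r. c * f r)"

definition ms_mult :: "mseries \<Rightarrow> mseries \<Rightarrow> mseries" where
  "ms_mult f g = (\<lambda>r. \<Sum>s\<in>{s. s \<le> r}. f s * g (r - s))"

definition ms_one :: mseries where
  "ms_one = (\<lambda>r. if r = (\<lambda>_. 0) then 1 else 0)"

definition U_top :: "mseries topology" where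
  "U_top = topology (\<lambda>V. V \<subseteq> U_alg \<and>
     (\<forall>f\<in>V. \<exists>m::nat. \<exists>e>0. {g \<in> U_alg. qnorm m (\<lambda>r. g r - f r) < e} \<subseteq> V))"

definition fps_top :: "complex fps topology" where
  "fps_top = pullback_topology UNIV fps_nth (product_topology (\<lambda>_. euclidean) UNIV)"

end

theory Submission
  imports Defs
begin

no_notation vec_nth (infixl \<open>$\<close> 90)
notation fps_nth (infixl \<open>$\<close> 75)


lemma fs_iff: "r \<in> fsupp_seqs \<longleftrightarrow> finite {i. r i \<noteq> 0}"
  by (simp add: fsupp_seqs_def)

lemma msize_superset:
  assumes "finite S" "{i. r i \<noteq> 0} \<subseteq> S"
  shows "msize r = sum r S"
  unfolding msize_def by (rule sum.mono_neutral_left) (use assms in auto)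

lemma fs_add: "r \<in> fsupp_seqs \<Longrightarrow> s \<in> fsupp_seqs \<Longrightarrow> (\<lambda>i. r i + s i) \<in> fsupp_seqs"
  unfolding fs_iff by (rule finite_subset[of _ "{i. r i \<noteq> 0} \<union> {i. s i \<noteq> 0}"]) auto

lemma fs_le: assumes "r \<in> fsupp_seqs" "s \<le> r" shows "s \<in> fsupp_seqs"
proof -
  have "{i. s i \<noteq> 0} \<subseteq> {i. r i \<noteq> 0}"
  proof
    fix i assume i: "i \<in> {i. s i \<noteq> 0}"
    have "s i \<le> r i" using assms(2) by (simp add: le_fun_def)
    then show "i \<in> {i. r i \<noteq> 0}" using i by auto
  qed
  then show ?thesis using assms(1) unfolding fs_iff by (rule finite_subset)
qed

lemma fs_diff: "r \<in> fsupp_seqs \<Longrightarrow> r - s \<in> fsupp_seqs"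
  unfolding fs_iff by (rule finite_subset[of _ "{i. r i \<noteq> 0}"]) auto

lemma msize_add: "r \<in> fsupp_seqs \<Longrightarrow> s \<in> fsupp_seqs \<Longrightarrow> msize (\<lambda>i. r i + s i) = msize r + msize s"
proof -
  assume a: "r \<in> fsupp_seqs" "s \<in> fsupp_seqs"
  let ?S = "{i. r i \<noteq> 0} \<union> {i. s i \<noteq> 0}"
  have f: "finite ?S" using a by (auto simp: fs_iff)
  have "msize (\<lambda>i. r i + s i) = (\<Sum>i\<in>?S. r i + s i)" by (rule msize_superset[OF f]) auto
  also have "\<dots> = sum r ?S + sum s ?S" by (simp add: sum.distrib)
  also have "\<dots> = msize r + msize s"
    using msize_superset[OF f, of r] msize_superset[OF f, of s] by auto
  finally show ?thesis .
qed

definition dl :: "nat \<Rightarrow> nat \<Rightarrow> nat" where "dl i = (\<lambda>j. if j = i then 1 else 0)"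

lemma dl_fs: "dl i \<in> fsupp_seqs"
  unfolding fs_iff dl_def by (rule finite_subset[of _ "{i}"]) auto

lemma msize_dl: "msize (dl i) = 1"
  by (subst msize_superset[of "{i}"]) (auto simp: dl_def)

lemma supp_dl: "{j. dl i j \<noteq> 0} = {i}" by (auto simp: dl_def)

lemma msize1: assumes "r \<in> fsupp_seqs" "msize r = 1" shows "\<exists>i. r = dl i"
proof -
  have f: "finite {i. r i \<noteq> 0}" using assms by (simp add: fs_iff)
  have s: "sum r {i. r i \<noteq> 0} = 1" using assms by (simp add: msize_def)
  then obtain i where i: "r i \<noteq> 0" by (metis (mono_tags, lifting) mem_Collect_eq sum.neutral zero_neq_one)
  have "r i + sum r ({i. r i \<noteq> 0} - {i}) = 1"
    using s f i by (metis (mono_tags, lifting) mem_Collect_eq sum.remove)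
  then have ri: "r i = 1" and rest: "sum r ({i. r i \<noteq> 0} - {i}) = 0" using i by auto
  have "\<forall>j\<in>{i. r i \<noteq> 0} - {i}. r j = 0" using rest f by simp
  then have "\<forall>j. j \<noteq> i \<longrightarrow> r j = 0" by auto
  then have "r = dl i" using ri by (auto simp: dl_def)
  then show ?thesis by blast
qed

lemma msize_zero: "msize (\<lambda>_. 0) = 0" by (simp add: msize_def)

lemma finite_le_fs: assumes "r \<in> fsupp_seqs" shows "finite {s. s \<le> r}"
proof -
  let ?S = "{i. r i \<noteq> 0}"
  have f: "finite ?S" using assms by (simp add: fs_iff)
  have "inj_on (\<lambda>s. restrict s ?S) {s. s \<le> r}"
  proof (rule inj_onI)
    fix s t assume s: "s \<in> {s. s \<le> r}" and t: "t \<in> {s. s \<le> r}" and e: "restrict s ?S = restrict t ?S"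
    show "s = t"
    proof
      fix i show "s i = t i"
      proof (cases "r i = 0")
        case True then show ?thesis using s t by (auto simp: le_fun_def) (metis le_zero_eq)
      next
        case False then show ?thesis using e by (metis (mono_tags, lifting) mem_Collect_eq restrict_apply')
      qed
    qed
  qed
  moreover have "(\<lambda>s. restrict s ?S) ` {s. s \<le> r} \<subseteq> PiE ?S (\<lambda>i. {..r i})"
  proof
    fix x assume "x \<in> (\<lambda>s. restrict s ?S) ` {s. s \<le> r}"
    then obtain s where s: "s \<le> r" "x = restrict s ?S" by auto
    have "\<forall>i\<in>?S. s i \<in> {..r i}" using s(1) by (auto simp: le_fun_def)
    then show "x \<in> PiE ?S (\<lambda>i. {..r i})" unfolding s(2) by (simp only: restrict_PiE_iff)
  qed
  moreover have "finite (PiE ?S (\<lambda>i. {..r i}))" using f by (simp add: finite_PiE)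
  ultimately show ?thesis using inj_on_finite by blast
qed

lemma U_alg_summ: "f \<in> U_alg \<Longrightarrow> (\<lambda>r. norm (f r) * real m ^ msize r) summable_on fsupp_seqs"
  by (simp add: U_alg_def)

lemma U_alg_supp: "f \<in> U_alg \<Longrightarrow> r \<notin> fsupp_seqs \<Longrightarrow> f r = 0"
  by (simp add: U_alg_def)

lemma U_alg_add: assumes "f \<in> U_alg" "g \<in> U_alg" shows "ms_add f g \<in> U_alg"
proof -
  have "(\<lambda>r. norm (f r + g r) * real m ^ msize r) summable_on fsupp_seqs" for m
  proof (rule summable_on_comparison_test)
    show "(\<lambda>r. norm (f r) * real m ^ msize r + norm (g r) * real m ^ msize r) summable_on fsupp_seqs"
      using assms by (intro summable_on_add U_alg_summ)
    show "norm (f r + g r) * real m ^ msize r \<le> norm (f r) * real m ^ msize r + norm (g r) * real m ^ msize r" for r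
      by (metis distrib_right mult_right_mono norm_triangle_ineq of_nat_0_le_iff zero_le_power)
  qed auto
  then show ?thesis using assms by (auto simp: U_alg_def ms_add_def)
qed

lemma U_alg_scale: assumes "f \<in> U_alg" shows "ms_scale c f \<in> U_alg"
proof -
  have "(\<lambda>r. norm c * (norm (f r) * real m ^ msize r)) summable_on fsupp_seqs" for m
    using assms by (intro summable_on_cmult_right U_alg_summ)
  then show ?thesis using assms by (auto simp: U_alg_def ms_scale_def norm_mult mult.assoc)
qed

lemma U_alg_diff: assumes "f \<in> U_alg" "g \<in> U_alg" shows "(\<lambda>r. g r - f r) \<in> U_alg"
proof -
  have "ms_add g (ms_scale (-1) f) = (\<lambda>r. g r - f r)" by (auto simp: ms_add_def ms_scale_def)
  then show ?thesis using U_alg_add U_alg_scale assms by metis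
qed

lemma U_lin_add: "f \<in> U_lin \<Longrightarrow> g \<in> U_lin \<Longrightarrow> ms_add f g \<in> U_lin"
  by (auto simp: U_lin_def U_alg_add) (auto simp: ms_add_def)

lemma U_lin_scale: "f \<in> U_lin \<Longrightarrow> ms_scale c f \<in> U_lin"
  by (auto simp: U_lin_def U_alg_scale) (auto simp: ms_scale_def)

lemma zero_U_lin: "(\<lambda>_. 0) \<in> U_lin"
  by (auto simp: U_lin_def U_alg_def)

definition ee :: "nat \<Rightarrow> mseries" where "ee i = (\<lambda>r. if r = dl i then 1 else 0)"

lemma ee_U_lin: "ee i \<in> U_lin"
proof -
  have "(\<lambda>r. norm (ee i r) * real m ^ msize r) summable_on fsupp_seqs" for m
    by (rule finite_nonzero_values_imp_summable_on, rule finite_subset[of _ "{dl i}"]) (auto simp: ee_def)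
  then show ?thesis using dl_fs msize_dl by (auto simp: U_lin_def U_alg_def ee_def)
qed

lemma qnorm_mono:
  assumes "d \<in> U_alg" "m1 \<le> m2"
  shows "qnorm m1 d \<le> qnorm m2 d"
  unfolding qnorm_def
  by (rule infsum_mono) (use assms in \<open>auto intro!: U_alg_summ mult_left_mono power_mono\<close>)

definition PU :: "mseries set \<Rightarrow> bool" where
  "PU = (\<lambda>V. V \<subseteq> U_alg \<and>
     (\<forall>f\<in>V. \<exists>m::nat. \<exists>e>0. {g \<in> U_alg. qnorm m (\<lambda>r. g r - f r) < e} \<subseteq> V))"

lemma istop_PU: "istopology PU"
  unfolding istopology_def
proof (intro conjI allI impI)
  fix S T assume S: "PU S" and T: "PU T"
  show "PU (S \<inter> T)" unfolding PU_def
  proof (intro conjI ballI)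
    show "S \<inter> T \<subseteq> U_alg" using S by (auto simp: PU_def)
    fix f assume f: "f \<in> S \<inter> T"
    obtain m1 e1 where 1: "e1 > 0" "{g \<in> U_alg. qnorm m1 (\<lambda>r. g r - f r) < e1} \<subseteq> S"
      using S f by (auto simp: PU_def)
    obtain m2 e2 where 2: "e2 > 0" "{g \<in> U_alg. qnorm m2 (\<lambda>r. g r - f r) < e2} \<subseteq> T"
      using T f by (auto simp: PU_def)
    have fU: "f \<in> U_alg" using S f by (auto simp: PU_def)
    have "{g \<in> U_alg. qnorm (max m1 m2) (\<lambda>r. g r - f r) < min e1 e2} \<subseteq> S \<inter> T"
    proof safe
      fix g assume g: "g \<in> U_alg" "qnorm (max m1 m2) (\<lambda>r. g r - f r) < min e1 e2"
      have d: "(\<lambda>r. g r - f r) \<in> U_alg" using U_alg_diff fU g by blast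
      have "qnorm m1 (\<lambda>r. g r - f r) < e1"
        using qnorm_mono[OF d, of m1 "max m1 m2"] g by auto
      then show "g \<in> S" using 1 g by auto
      have "qnorm m2 (\<lambda>r. g r - f r) < e2"
        using qnorm_mono[OF d, of m2 "max m1 m2"] g by auto
      then show "g \<in> T" using 2 g by auto
    qed
    then show "\<exists>m e. e > 0 \<and> {g \<in> U_alg. qnorm m (\<lambda>r. g r - f r) < e} \<subseteq> S \<inter> T"
      using 1 2 by (intro exI[of _ "max m1 m2"] exI[of _ "min e1 e2"]) auto
  qed
next
  fix K assume K: "\<forall>V\<in>K. PU V"
  show "PU (\<Union>K)" unfolding PU_def
  proof (intro conjI ballI)
    show "\<Union>K \<subseteq> U_alg" using K by (auto simp: PU_def)
    fix f assume "f \<in> \<Union>K"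
    then obtain V where V: "V \<in> K" "f \<in> V" by auto
    have "PU V" using K V(1) by blast
    then have "\<exists>m e. e > 0 \<and> {g \<in> U_alg. qnorm m (\<lambda>r. g r - f r) < e} \<subseteq> V"
      using V(2) unfolding PU_def by blast
    then obtain m e where "e > 0" "{g \<in> U_alg. qnorm m (\<lambda>r. g r - f r) < e} \<subseteq> V"
      by blast
    then show "\<exists>m e. e > 0 \<and> {g \<in> U_alg. qnorm m (\<lambda>r. g r - f r) < e} \<subseteq> \<Union>K"
      using V by blast
  qed
qed

lemma openin_U_top: "openin U_top = PU"
  unfolding U_top_def PU_def[symmetric] using istop_PU by simp

lemma topspace_U_top: "topspace U_top = U_alg"
proof -
  have "PU U_alg" unfolding PU_def by (auto intro: exI[of _ "1::real"])
  then show ?thesis unfolding topspace_def openin_U_top by (auto simp: PU_def)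
qed





definition Bp :: "(nat \<Rightarrow> complex fps) \<Rightarrow> (nat \<Rightarrow> nat) \<Rightarrow> complex fps" where
  "Bp b r = (\<Prod>i\<in>{i. r i \<noteq> 0}. b i ^ r i)"

lemma Bp_superset:
  assumes "finite S" "{i. r i \<noteq> 0} \<subseteq> S"
  shows "Bp b r = (\<Prod>i\<in>S. b i ^ r i)"
  unfolding Bp_def by (rule prod.mono_neutral_left) (use assms in auto)

lemma Bp_zero: "Bp b (\<lambda>_. 0) = 1" by (simp add: Bp_def)

lemma Bp_dl: "Bp b (dl i) = b i" by (simp add: Bp_def supp_dl) (simp add: dl_def)

lemma Bp_add: assumes "r \<in> fsupp_seqs" "s \<in> fsupp_seqs"
  shows "Bp b (\<lambda>i. r i + s i) = Bp b r * Bp b s"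
proof -
  let ?S = "{i. r i \<noteq> 0} \<union> {i. s i \<noteq> 0}"
  have f: "finite ?S" using assms by (auto simp: fs_iff)
  have "Bp b (\<lambda>i. r i + s i) = (\<Prod>i\<in>?S. b i ^ (r i + s i))" by (rule Bp_superset[OF f]) auto
  also have "\<dots> = (\<Prod>i\<in>?S. b i ^ r i) * (\<Prod>i\<in>?S. b i ^ s i)" by (simp add: power_add prod.distrib)
  also have "\<dots> = Bp b r * Bp b s"
    using Bp_superset[OF f, of r b] Bp_superset[OF f, of s b] by auto
  finally show ?thesis .
qed

lemma mult_bound:
  fixes a c :: "complex fps"
  assumes a: "\<forall>n\<le>k. norm (a $ n) \<le> K" and c: "\<forall>n\<le>k. norm (c $ n) \<le> C" and K: "0 \<le> K"
  shows "\<forall>n\<le>k. norm ((a*c) $ n) \<le> real (Suc k) * K * C"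
proof (intro allI impI)
  fix n assume n: "n \<le> k"
  have C: "0 \<le> C" using c norm_ge_zero order_trans by blast
  have "norm ((a*c) $ n) = norm (\<Sum>i=0..n. a $ i * c $ (n-i))" by (simp add: fps_mult_nth)
  also have "\<dots> \<le> (\<Sum>i=0..n. norm (a $ i * c $ (n-i)))" by (rule norm_sum)
  also have "\<dots> \<le> (\<Sum>i=0..n. K * C)"
  proof (rule sum_mono)
    fix i assume i: "i \<in> {0..n}"
    have "norm (a $ i) \<le> K" "norm (c $ (n-i)) \<le> C" using a c i n by auto
    then show "norm (a $ i * c $ (n-i)) \<le> K * C" unfolding norm_mult using K by (intro mult_mono) auto
  qed
  also have "\<dots> = real (Suc n) * (K * C)" by simp
  also have "\<dots> \<le> real (Suc k) * (K * C)" using n K C by (intro mult_right_mono) auto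
  finally show "norm ((a*c) $ n) \<le> real (Suc k) * K * C" by (simp add: mult.assoc)
qed

lemma pow_bound:
  fixes a c :: "complex fps"
  assumes a: "\<forall>n\<le>k. norm (a $ n) \<le> K" and K: "0 \<le> K"
  and c: "\<forall>n\<le>k. norm (c $ n) \<le> (real (Suc k) * K) ^ p"
  shows "\<forall>n\<le>k. norm ((a^j * c) $ n) \<le> (real (Suc k) * K) ^ (j + p)"
proof (induction j)
  case 0 then show ?case using c by simp
next
  case (Suc j)
  have "\<forall>n\<le>k. norm ((a * (a^j * c)) $ n) \<le> real (Suc k) * K * (real (Suc k) * K) ^ (j + p)"
    by (rule mult_bound[OF a Suc.IH K])
  then show ?case by (simp add: mult.assoc)
qed

lemma prod_bound:
  fixes b :: "nat \<Rightarrow> complex fps"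
  assumes "finite S" and b: "\<forall>i n. n \<le> k \<longrightarrow> norm (b i $ n) \<le> K" and K: "0 \<le> K"
  shows "\<forall>n\<le>k. norm ((\<Prod>i\<in>S. b i ^ r i) $ n) \<le> (real (Suc k) * K) ^ (sum r S)"
  using assms(1)
proof (induction S rule: finite_induct)
  case empty then show ?case by (simp add: fps_one_nth)
next
  case (insert x S)
  have "\<forall>n\<le>k. norm ((b x ^ r x * (\<Prod>i\<in>S. b i ^ r i)) $ n) \<le> (real (Suc k) * K) ^ (r x + sum r S)"
    by (rule pow_bound) (use b K insert.IH in auto)
  then show ?case using insert.hyps by simp
qed

lemma Bp_bound:
  assumes "r \<in> fsupp_seqs" and b: "\<forall>i n. n \<le> k \<longrightarrow> norm (b i $ n) \<le> K" and K: "0 \<le> K"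
  shows "\<forall>n\<le>k. norm (Bp b r $ n) \<le> (real (Suc k) * K) ^ msize r"
  using prod_bound[of "{i. r i \<noteq> 0}" k b K r] assms by (simp add: fs_iff Bp_def msize_def)

definition good :: "(nat \<Rightarrow> complex fps) \<Rightarrow> bool" where
  "good b \<longleftrightarrow> (\<forall>k. \<exists>m::nat. \<forall>n\<le>k. \<forall>r\<in>fsupp_seqs. norm (Bp b r $ n) \<le> real m ^ msize r)"

lemma good_intro:
  assumes M: "\<And>n i. norm (b i $ n) \<le> M n"
  shows "good b"
  unfolding good_def
proof
  fix k
  define K where "K = (\<Sum>n\<le>k. M n)"
  have M0: "0 \<le> M n" for n using M[of 0 n] norm_ge_zero order_trans by blast
  have K0: "0 \<le> K" unfolding K_def using M0 by (simp add: sum_nonneg)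
  have bK: "\<forall>i n. n \<le> k \<longrightarrow> norm (b i $ n) \<le> K"
  proof (intro allI impI)
    fix i n assume n: "n \<le> k"
    have "M n \<le> K" unfolding K_def by (rule member_le_sum) (use n M0 in auto)
    then show "norm (b i $ n) \<le> K" using M[of i n] by linarith
  qed
  define L where "L = real (Suc k) * K"
  have L0: "0 \<le> L" unfolding L_def using K0 by simp
  have Lm: "L \<le> real (nat \<lceil>L\<rceil>)" by linarith
  show "\<exists>m::nat. \<forall>n\<le>k. \<forall>r\<in>fsupp_seqs. norm (Bp b r $ n) \<le> real m ^ msize r"
  proof (intro exI[of _ "nat \<lceil>L\<rceil>"] allI impI ballI)
    fix n r assume n: "n \<le> k" and r: "r \<in> fsupp_seqs"
    have "norm (Bp b r $ n) \<le> L ^ msize r" using Bp_bound[OF r bK K0] n unfolding L_def by blast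
    also have "\<dots> \<le> real (nat \<lceil>L\<rceil>) ^ msize r" by (rule power_mono[OF Lm L0])
    finally show "norm (Bp b r $ n) \<le> real (nat \<lceil>L\<rceil>) ^ msize r" .
  qed
qed

lemma good_D: "good b \<Longrightarrow> \<exists>m::nat. \<forall>n\<le>k. \<forall>r\<in>fsupp_seqs. norm (Bp b r $ n) \<le> real m ^ msize r"
  by (simp add: good_def)

definition cf :: "(nat \<Rightarrow> complex fps) \<Rightarrow> mseries \<Rightarrow> nat \<Rightarrow> complex" where
  "cf b f k = (\<Sum>\<^sub>\<infinity>r\<in>fsupp_seqs. f r * Bp b r $ k)"

lemma coef_abs_summ:
  assumes B: "\<forall>r\<in>fsupp_seqs. norm (Bp b r $ k) \<le> real m ^ msize r" and f: "f \<in> U_alg"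
  shows "(\<lambda>r. norm (f r * Bp b r $ k)) summable_on fsupp_seqs"
proof (rule summable_on_comparison_test)
  show "(\<lambda>r. norm (f r) * real m ^ msize r) summable_on fsupp_seqs" using f by (rule U_alg_summ)
  show "0 \<le> norm (f r * Bp b r $ k)" for r by simp
  fix r assume "r \<in> fsupp_seqs"
  then show "norm (f r * Bp b r $ k) \<le> norm (f r) * real m ^ msize r"
    using B unfolding norm_mult by (intro mult_left_mono) auto
qed

lemma good_bound_k:
  assumes "good b" obtains m :: nat where "\<forall>r\<in>fsupp_seqs. norm (Bp b r $ k) \<le> real m ^ msize r"
  using good_D[OF assms, of k] by blast

lemma good_abs_summ:
  assumes "good b" "f \<in> U_alg"
  shows "(\<lambda>r. norm (f r * Bp b r $ k)) summable_on fsupp_seqs"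
  using good_bound_k[OF assms(1), of k] coef_abs_summ assms(2) by metis

lemma good_summ:
  assumes "good b" "f \<in> U_alg"
  shows "(\<lambda>r. f r * Bp b r $ k) summable_on fsupp_seqs"
  by (rule abs_summable_summable[OF good_abs_summ[OF assms]])

lemma cf_add: assumes "good b" "f \<in> U_alg" "g \<in> U_alg"
  shows "cf b (ms_add f g) k = cf b f k + cf b g k"
proof -
  have "cf b (ms_add f g) k = (\<Sum>\<^sub>\<infinity>r\<in>fsupp_seqs. f r * Bp b r $ k + g r * Bp b r $ k)"
    unfolding cf_def ms_add_def by (simp add: distrib_right)
  also have "\<dots> = cf b f k + cf b g k"
    unfolding cf_def by (rule infsum_add) (use good_summ assms in auto)
  finally show ?thesis .
qed

lemma cf_scale: "cf b (ms_scale c f) k = c * cf b f k"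
  unfolding cf_def ms_scale_def by (simp add: mult.assoc infsum_cmult_right')

lemma cf_diff: assumes "good b" "f \<in> U_alg" "g \<in> U_alg"
  shows "cf b (\<lambda>r. g r - f r) k = cf b g k - cf b f k"
proof -
  have "ms_add g (ms_scale (-1) f) = (\<lambda>r. g r - f r)" by (auto simp: ms_add_def ms_scale_def)
  then show ?thesis using cf_add[OF assms(1,3) U_alg_scale[OF assms(2), of "-1"]] cf_scale[of b "-1" f k]
    by simp
qed

lemma cf_bound:
  assumes B: "\<forall>r\<in>fsupp_seqs. norm (Bp b r $ k) \<le> real m ^ msize r" and f: "f \<in> U_alg"
  shows "norm (cf b f k) \<le> qnorm m f"
proof -
  have "norm (cf b f k) \<le> (\<Sum>\<^sub>\<infinity>r\<in>fsupp_seqs. norm (f r * Bp b r $ k))"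
    unfolding cf_def by (rule norm_infsum_bound) (rule coef_abs_summ[OF B f])
  also have "\<dots> \<le> qnorm m f"
    unfolding qnorm_def
  proof (rule infsum_mono)
    show "(\<lambda>r. norm (f r * Bp b r $ k)) summable_on fsupp_seqs" by (rule coef_abs_summ[OF B f])
    show "(\<lambda>r. norm (f r) * real m ^ msize r) summable_on fsupp_seqs" using f by (rule U_alg_summ)
    fix r assume "r \<in> fsupp_seqs"
    then show "norm (f r * Bp b r $ k) \<le> norm (f r) * real m ^ msize r"
      using B unfolding norm_mult by (intro mult_left_mono) auto
  qed
  finally show ?thesis .
qed

lemma cont_U_top:
  fixes h :: "mseries \<Rightarrow> complex"
  assumes "\<forall>f\<in>U_alg. \<forall>\<epsilon>>0. \<exists>m e. e > 0 \<and> (\<forall>g\<in>U_alg. qnorm m (\<lambda>r. g r - f r) < e \<longrightarrow> dist (h g) (h f) < \<epsilon>)"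
  shows "continuous_map U_top euclidean h"
  unfolding continuous_map_def
proof (intro conjI allI impI)
  show "h \<in> topspace U_top \<rightarrow> topspace euclidean" by simp
  fix U :: "complex set" assume "openin euclidean U"
  then have U: "open U" by simp
  show "openin U_top {x \<in> topspace U_top. h x \<in> U}"
    unfolding openin_U_top topspace_U_top PU_def
  proof (intro conjI ballI)
    show "{x \<in> U_alg. h x \<in> U} \<subseteq> U_alg" by auto
    fix f assume f: "f \<in> {x \<in> U_alg. h x \<in> U}"
    then obtain \<epsilon> where \<epsilon>: "\<epsilon> > 0" "ball (h f) \<epsilon> \<subseteq> U" using U open_contains_ball by blast
    obtain m e where me: "e > 0" "\<forall>g\<in>U_alg. qnorm m (\<lambda>r. g r - f r) < e \<longrightarrow> dist (h g) (h f) < \<epsilon>"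
      using assms f \<epsilon> by blast
    have "{g \<in> U_alg. qnorm m (\<lambda>r. g r - f r) < e} \<subseteq> {x \<in> U_alg. h x \<in> U}"
    proof safe
      fix g assume "g \<in> U_alg" "qnorm m (\<lambda>r. g r - f r) < e"
      then have "dist (h g) (h f) < \<epsilon>" using me by blast
      then have "dist (h f) (h g) < \<epsilon>" by (simp add: dist_commute)
      then show "h g \<in> U" using \<epsilon> by auto
    qed
    then show "\<exists>m e. e > 0 \<and> {g \<in> U_alg. qnorm m (\<lambda>r. g r - f r) < e} \<subseteq> {x \<in> U_alg. h x \<in> U}"
      using me by blast
  qed
qed

definition ext :: "(nat \<Rightarrow> complex fps) \<Rightarrow> mseries \<Rightarrow> complex fps" where
  "ext b f = Abs_fps (cf b f)"

lemma ext_nth[simp]: "ext b f $ k = cf b f k" by (simp add: ext_def)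

lemma cf_cont: assumes "good b" shows "continuous_map U_top euclidean (\<lambda>f. cf b f k)"
proof (rule cont_U_top, intro ballI allI impI)
  obtain m where B: "\<forall>r\<in>fsupp_seqs. norm (Bp b r $ k) \<le> real m ^ msize r"
    using good_bound_k[OF assms] by blast
  fix f :: mseries and \<epsilon> :: real assume f: "f \<in> U_alg" and e: "\<epsilon> > 0"
  show "\<exists>m e. e > 0 \<and> (\<forall>g\<in>U_alg. qnorm m (\<lambda>r. g r - f r) < e \<longrightarrow> dist (cf b g k) (cf b f k) < \<epsilon>)"
  proof (intro exI[of _ m] exI[of _ \<epsilon>] conjI ballI impI)
    fix g assume g: "g \<in> U_alg" and q: "qnorm m (\<lambda>r. g r - f r) < \<epsilon>"
    have "dist (cf b g k) (cf b f k) = norm (cf b (\<lambda>r. g r - f r) k)"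
      using cf_diff[OF assms f g] by (simp add: dist_norm)
    also have "\<dots> \<le> qnorm m (\<lambda>r. g r - f r)" by (rule cf_bound[OF B U_alg_diff[OF f g]])
    finally show "dist (cf b g k) (cf b f k) < \<epsilon>" using q by linarith
  qed (use e in auto)
qed

lemma ext_cont: assumes "good b" shows "continuous_map U_top fps_top (ext b)"
  unfolding fps_top_def
proof (rule continuous_map_pullback')
  show "continuous_map U_top (product_topology (\<lambda>_. euclidean) UNIV) (fps_nth \<circ> ext b)"
    unfolding continuous_map_componentwise_UNIV using cf_cont[OF assms] by simp
qed auto




lemma ext_add: "good b \<Longrightarrow> f \<in> U_alg \<Longrightarrow> g \<in> U_alg \<Longrightarrow> ext b (ms_add f g) = ext b f + ext b g"
  by (rule fps_ext) (simp add: cf_add)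

lemma ext_scale: "ext b (ms_scale c f) = fps_const c * ext b f"
  by (rule fps_ext) (simp add: cf_scale)

lemma zero_fs: "(\<lambda>_. 0) \<in> fsupp_seqs" by (simp add: fs_iff)

lemma ext_one: "ext b ms_one = 1"
proof (rule fps_ext)
  fix k
  have "cf b ms_one k = (\<Sum>\<^sub>\<infinity>r\<in>{\<lambda>_. 0}. ms_one r * Bp b r $ k)"
    unfolding cf_def by (rule infsum_cong_neutral) (auto simp: ms_one_def zero_fs)
  also have "\<dots> = (1::complex fps) $ k" by (simp add: ms_one_def Bp_zero)
  finally show "ext b ms_one $ k = 1 $ k" by simp
qed

lemma prod_has_sum:
  fixes F G :: "'a \<Rightarrow> complex"
  assumes F: "(\<lambda>x. norm (F x)) summable_on A" and G: "(\<lambda>y. norm (G y)) summable_on B"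
  shows "((\<lambda>(x,y). F x * G y) has_sum (infsum F A * infsum G B)) (A \<times> B)"
proof -
  have abs: "(\<lambda>z. norm ((\<lambda>(x,y). F x * G y) z)) summable_on (Sigma A (\<lambda>_. B))"
  proof (rule iffD2[OF Infinite_Sum.abs_summable_on_Sigma_iff[where f="\<lambda>(x,y). F x * G y" and A=A and B="\<lambda>_. B"]], intro conjI ballI)
    fix x assume "x \<in> A"
    show "(\<lambda>y. norm ((\<lambda>(x,y). F x * G y) (x, y))) summable_on B"
      using summable_on_cmult_right[OF G, of "norm (F x)"] by (simp add: norm_mult)
  next
    have e: "(\<Sum>\<^sub>\<infinity>y\<in>B. norm ((\<lambda>(x,y). F x * G y) (x, y))) = norm (F x) * (\<Sum>\<^sub>\<infinity>y\<in>B. norm (G y))" for x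
      by (simp add: norm_mult infsum_cmult_right')
    have n: "0 \<le> (\<Sum>\<^sub>\<infinity>y\<in>B. norm (G y))" by (rule infsum_nonneg) simp
    show "(\<lambda>x. norm (\<Sum>\<^sub>\<infinity>y\<in>B. norm ((\<lambda>(x,y). F x * G y) (x, y)))) summable_on A"
      unfolding e using summable_on_cmult_left[OF F, of "\<Sum>\<^sub>\<infinity>y\<in>B. norm (G y)"] n
      by (simp add: norm_mult)
  qed
  have sm: "(\<lambda>(x,y). F x * G y) summable_on (A \<times> B)"
    using abs_summable_summable[OF abs] by simp
  have "infsum (\<lambda>(x,y). F x * G y) (A \<times> B) = (\<Sum>\<^sub>\<infinity>x\<in>A. \<Sum>\<^sub>\<infinity>y\<in>B. (\<lambda>(x,y). F x * G y) (x,y))"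
    by (rule infsum_Sigma_banach[symmetric]) (use sm in simp)
  also have "\<dots> = (\<Sum>\<^sub>\<infinity>x\<in>A. F x * infsum G B)" by (simp add: infsum_cmult_right')
  also have "\<dots> = infsum F A * infsum G B" by (simp add: infsum_cmult_left')
  finally show ?thesis using has_sum_infsum[OF sm] by simp
qed

lemma has_sum_sum_fin:
  fixes H :: "'j \<Rightarrow> 'a \<Rightarrow> complex"
  assumes "finite J" "\<forall>j\<in>J. (H j has_sum S j) A"
  shows "((\<lambda>x. \<Sum>j\<in>J. H j x) has_sum (\<Sum>j\<in>J. S j)) A"
  using assms by (induction J rule: finite_induct) (auto intro: has_sum_add)

lemma ext_mult:
  assumes gb: "good b" and f: "f \<in> U_alg" and g: "g \<in> U_alg"
  shows "ext b (ms_mult f g) = ext b f * ext b g"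
proof (rule fps_ext)
  fix k
  let ?B = "Bp b"
  define h where "h = (\<lambda>(s::nat\<Rightarrow>nat, t::nat\<Rightarrow>nat). f s * g t * ?B (\<lambda>i. s i + t i) $ k)"
  have hj: "((\<lambda>(s,t). (f s * ?B s $ j) * (g t * ?B t $ (k-j))) has_sum (cf b f j * cf b g (k-j))) (fsupp_seqs \<times> fsupp_seqs)" for j
    unfolding cf_def by (rule prod_has_sum) (use good_abs_summ gb f g in auto)
  have H: "((\<lambda>z. \<Sum>j\<in>{0..k}. (\<lambda>(s,t). (f s * ?B s $ j) * (g t * ?B t $ (k-j))) z) has_sum (\<Sum>j\<in>{0..k}. cf b f j * cf b g (k-j))) (fsupp_seqs \<times> fsupp_seqs)"
    by (rule has_sum_sum_fin) (use hj in auto)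
  have hs: "(h has_sum (ext b f * ext b g) $ k) (fsupp_seqs \<times> fsupp_seqs)"
  proof -
    have "(ext b f * ext b g) $ k = (\<Sum>j\<in>{0..k}. cf b f j * cf b g (k-j))"
      by (simp add: fps_mult_nth)
    moreover have "(\<Sum>j\<in>{0..k}. (\<lambda>(s,t). (f s * ?B s $ j) * (g t * ?B t $ (k-j))) z) = h z"
      if z: "z \<in> fsupp_seqs \<times> fsupp_seqs" for z
    proof -
      obtain s t where st: "z = (s,t)" "s \<in> fsupp_seqs" "t \<in> fsupp_seqs" using z by auto
      have "(\<Sum>j\<in>{0..k}. (f s * ?B s $ j) * (g t * ?B t $ (k-j))) = f s * g t * (\<Sum>j\<in>{0..k}. ?B s $ j * ?B t $ (k-j))"
        by (simp add: sum_distrib_left mult_ac)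
      also have "\<dots> = f s * g t * (?B s * ?B t) $ k" by (simp add: fps_mult_nth)
      also have "\<dots> = h z" unfolding h_def st(1) using Bp_add[OF st(2,3)] by simp
      finally show ?thesis using st(1) by simp
    qed
    ultimately show ?thesis using H has_sum_cong by (metis (no_types, lifting))
  qed
  define Sig where "Sig = Sigma fsupp_seqs (\<lambda>r. {s. s \<le> r})"
  define h' where "h' = (\<lambda>(r::nat\<Rightarrow>nat, s::nat\<Rightarrow>nat). f s * g (r - s) * ?B r $ k)"
  have addsub: "(\<lambda>i. s i + (r - s) i) = r" if "s \<le> r" for r s :: "nat \<Rightarrow> nat"
    using that by (auto simp: le_fun_def fun_eq_iff)
  have hs': "(h' has_sum (ext b f * ext b g) $ k) Sig"
  proof -
    have "(h' has_sum (ext b f * ext b g) $ k) Sig = (h has_sum (ext b f * ext b g) $ k) (fsupp_seqs \<times> fsupp_seqs)"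
    proof (rule has_sum_reindex_bij_witness[where j = "\<lambda>(r,s). (s, r - s)" and i = "\<lambda>(s,t). ((\<lambda>i. s i + t i), s)"])
      fix a assume "a \<in> Sig"
      then obtain r s where a: "a = (r,s)" "r \<in> fsupp_seqs" "s \<le> r" unfolding Sig_def by auto
      show "(\<lambda>(s,t). ((\<lambda>i. s i + t i), s)) ((\<lambda>(r,s). (s, r - s)) a) = a" using a addsub by simp
      show "(\<lambda>(r,s). (s, r - s)) a \<in> fsupp_seqs \<times> fsupp_seqs" using a fs_le fs_diff by auto
      show "h ((\<lambda>(r,s). (s, r - s)) a) = h' a" using a addsub unfolding h_def h'_def by simp
    next
      fix z assume "z \<in> fsupp_seqs \<times> fsupp_seqs"
      then obtain s t where z: "z = (s,t)" "s \<in> fsupp_seqs" "t \<in> fsupp_seqs" by auto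
      have "(\<lambda>i. s i + t i) - s = t" by (auto simp: fun_eq_iff)
      then show "(\<lambda>(r,s). (s, r - s)) ((\<lambda>(s,t). ((\<lambda>i. s i + t i), s)) z) = z" using z by simp
      have "s \<le> (\<lambda>i. s i + t i)" by (auto simp: le_fun_def)
      then show "(\<lambda>(s,t). ((\<lambda>i. s i + t i), s)) z \<in> Sig" using z fs_add unfolding Sig_def by auto
    qed simp
    then show ?thesis using hs by simp
  qed
  have "cf b (ms_mult f g) k = (\<Sum>\<^sub>\<infinity>r\<in>fsupp_seqs. \<Sum>\<^sub>\<infinity>s\<in>{s. s \<le> r}. h' (r,s))"
    unfolding cf_def
  proof (rule infsum_cong)
    fix r assume r: "r \<in> fsupp_seqs"
    have "(\<Sum>\<^sub>\<infinity>s\<in>{s. s \<le> r}. h' (r,s)) = (\<Sum>s\<in>{s. s \<le> r}. f s * g (r - s) * ?B r $ k)"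
      using finite_le_fs[OF r] unfolding h'_def by simp
    also have "\<dots> = ms_mult f g r * ?B r $ k" unfolding ms_mult_def by (simp add: sum_distrib_right)
    finally show "ms_mult f g r * ?B r $ k = (\<Sum>\<^sub>\<infinity>s\<in>{s. s \<le> r}. h' (r,s))" by simp
  qed
  also have "\<dots> = infsum h' Sig"
    unfolding Sig_def by (rule infsum_Sigma_banach) (use hs' Sig_def has_sum_imp_summable in blast)
  also have "\<dots> = (ext b f * ext b g) $ k" using hs' by (rule infsumI)
  finally show "ext b (ms_mult f g) $ k = (ext b f * ext b g) $ k" by simp
qed




lemma fps_nth_cont: "continuous_map fps_top euclidean (\<lambda>x. x $ k)"
  unfolding fps_top_def
  using continuous_map_pullback[OF continuous_map_product_projection[of k UNIV "\<lambda>_. euclidean"], of UNIV fps_nth]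
  by (simp add: o_def)

lemma U_lin_alg: "f \<in> U_lin \<Longrightarrow> f \<in> U_alg" by (simp add: U_lin_def)

lemma cont_eps:
  fixes \<beta> :: "mseries \<Rightarrow> complex fps"
  assumes cont: "continuous_map (subtopology U_top U_lin) fps_top \<beta>" and f: "f \<in> U_lin" and e: "\<epsilon> > 0"
  shows "\<exists>m e. e > 0 \<and> (\<forall>g\<in>U_lin. qnorm m (\<lambda>r. g r - f r) < e \<longrightarrow> dist (\<beta> g $ k) (\<beta> f $ k) < \<epsilon>)"
proof -
  have c: "continuous_map (subtopology U_top U_lin) euclidean (\<lambda>g. \<beta> g $ k)"
    using continuous_map_compose[OF cont fps_nth_cont[of k]] by (simp add: o_def)
  have "openin (subtopology U_top U_lin) {x \<in> topspace (subtopology U_top U_lin). \<beta> x $ k \<in> ball (\<beta> f $ k) \<epsilon>}"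
    using c by (rule openin_continuous_map_preimage) simp
  then obtain T where T: "openin U_top T"
    and eq: "{x \<in> topspace (subtopology U_top U_lin). \<beta> x $ k \<in> ball (\<beta> f $ k) \<epsilon>} = T \<inter> U_lin"
    unfolding openin_subtopology by blast
  have ts: "topspace (subtopology U_top U_lin) = U_lin"
    using U_lin_alg by (auto simp: topspace_subtopology topspace_U_top)
  have "f \<in> {x \<in> topspace (subtopology U_top U_lin). \<beta> x $ k \<in> ball (\<beta> f $ k) \<epsilon>}"
    using f e unfolding ts by simp
  then have "f \<in> T" unfolding eq by blast
  then obtain m e where me: "e > 0" "{g \<in> U_alg. qnorm m (\<lambda>r. g r - f r) < e} \<subseteq> T"
    using T unfolding openin_U_top PU_def by blast
  show ?thesis
  proof (intro exI[of _ m] exI[of _ e] conjI ballI impI)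
    fix g assume g: "g \<in> U_lin" "qnorm m (\<lambda>r. g r - f r) < e"
    then have "g \<in> T" using me U_lin_alg by blast
    then have "g \<in> T \<inter> U_lin" using g by blast
    then have "\<beta> g $ k \<in> ball (\<beta> f $ k) \<epsilon>" unfolding eq[symmetric] by blast
    then show "dist (\<beta> g $ k) (\<beta> f $ k) < \<epsilon>" by (simp add: dist_commute)
  qed (use me in auto)
qed

lemma qnorm_single:
  "qnorm m (\<lambda>r. ms_scale c (ee i) r - 0) = norm c * real m"
proof -
  have "qnorm m (\<lambda>r. ms_scale c (ee i) r - 0) = (\<Sum>\<^sub>\<infinity>r\<in>{dl i}. norm (ms_scale c (ee i) r - 0) * real m ^ msize r)"
    unfolding qnorm_def by (rule infsum_cong_neutral) (auto simp: ms_scale_def ee_def dl_fs)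
  also have "\<dots> = norm c * real m" by (simp add: ms_scale_def ee_def msize_dl)
  finally show ?thesis .
qed

lemma beta_bound:
  fixes \<beta> :: "mseries \<Rightarrow> complex fps"
  assumes lin_scale: "\<And>c f. f \<in> U_lin \<Longrightarrow> \<beta> (ms_scale c f) = fps_const c * \<beta> f"
    and cont: "continuous_map (subtopology U_top U_lin) fps_top \<beta>"
  shows "\<exists>M. \<forall>n i. norm (\<beta> (ee i) $ n) \<le> M n"
proof -
  have z: "\<beta> (\<lambda>_. 0) = 0"
    using lin_scale[OF zero_U_lin, of 0] by (simp add: ms_scale_def)
  have "\<exists>M. \<forall>i. norm (\<beta> (ee i) $ n) \<le> M" for n
  proof -
    obtain m e where me: "e > 0" "\<forall>g\<in>U_lin. qnorm m (\<lambda>r. g r - 0) < e \<longrightarrow> dist (\<beta> g $ n) (\<beta> (\<lambda>_. 0) $ n) < 1"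
      using cont_eps[OF cont zero_U_lin, of 1 n] by auto
    define c where "c = e / (real m + 1)"
    have c0: "c > 0" unfolding c_def using me by simp
    have "norm (\<beta> (ee i) $ n) \<le> 1 / c" for i
    proof -
      let ?g = "ms_scale (complex_of_real c) (ee i)"
      have gU: "?g \<in> U_lin" by (rule U_lin_scale[OF ee_U_lin])
      have "qnorm m (\<lambda>r. ?g r - 0) = c * real m" using qnorm_single c0 by simp
      also have "\<dots> < e"
      proof -
        have "c * real m = e * (real m / (real m + 1))" unfolding c_def by simp
        moreover have "real m / (real m + 1) < 1" by simp
        ultimately show ?thesis using me(1) by (metis mult.right_neutral mult_strict_left_mono)
      qed
      finally have "dist (\<beta> ?g $ n) (\<beta> (\<lambda>_. 0) $ n) < 1" using me gU by blast
      then have "norm (complex_of_real c * \<beta> (ee i) $ n) < 1"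
        using lin_scale[OF ee_U_lin] z by (simp add: dist_norm)
      then have "c * norm (\<beta> (ee i) $ n) < 1" using c0 by (simp add: norm_mult)
      then show ?thesis using c0 by (simp add: field_simps)
    qed
    then show ?thesis by blast
  qed
  then show ?thesis using choice[of "\<lambda>n M. \<forall>i. norm (\<beta> (ee i) $ n) \<le> M"] by blast
qed

lemma trunc_lin:
  fixes \<beta> :: "mseries \<Rightarrow> complex fps"
  assumes lin_add: "\<And>f g. f \<in> U_lin \<Longrightarrow> g \<in> U_lin \<Longrightarrow> \<beta> (ms_add f g) = \<beta> f + \<beta> g"
    and lin_scale: "\<And>c f. f \<in> U_lin \<Longrightarrow> \<beta> (ms_scale c f) = fps_const c * \<beta> f"
    and f: "f \<in> U_lin"
    and F: "finite F" "F \<subseteq> fsupp_seqs"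
  shows "(\<lambda>r. if r \<in> F then f r else 0) \<in> U_lin \<and>
         \<beta> (\<lambda>r. if r \<in> F then f r else 0) = (\<Sum>r\<in>F. fps_const (f r) * Bp (\<lambda>i. \<beta> (ee i)) r)"
  using F
proof (induction F rule: finite_induct)
  case empty
  have z: "\<beta> (\<lambda>_. 0) = 0"
    using lin_scale[OF zero_U_lin, of 0] by (simp add: ms_scale_def)
  show ?case using z zero_U_lin by simp
next
  case (insert x F)
  let ?fF = "\<lambda>r. if r \<in> F then f r else 0"
  have IH: "?fF \<in> U_lin" "\<beta> ?fF = (\<Sum>r\<in>F. fps_const (f r) * Bp (\<lambda>i. \<beta> (ee i)) r)"
    using insert by auto
  have x: "x \<in> fsupp_seqs" using insert by auto
  show ?case
  proof (cases "msize x = 1")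
    case True
    then obtain i where i: "x = dl i" using msize1[OF x] by blast
    have e: "(\<lambda>r. if r \<in> insert x F then f r else 0) = ms_add ?fF (ms_scale (f x) (ee i))"
      using insert.hyps(2) by (intro ext) (auto simp: ms_add_def ms_scale_def ee_def i)
    have sU: "ms_scale (f x) (ee i) \<in> U_lin" by (rule U_lin_scale[OF ee_U_lin])
    show ?thesis
      unfolding e using U_lin_add[OF IH(1) sU] lin_add[OF IH(1) sU] lin_scale[OF ee_U_lin] IH(2) insert.hyps
      by (simp add: i Bp_dl add.commute)
  next
    case False
    then have fx: "f x = 0" using f by (simp add: U_lin_def)
    have e: "(\<lambda>r. if r \<in> insert x F then f r else 0) = ?fF"
      by (intro ext) (use fx in auto)
    show ?thesis unfolding e using IH insert.hyps fx by simp
  qed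
qed

lemma ext_extends:
  fixes \<beta> :: "mseries \<Rightarrow> complex fps"
  assumes lin_add: "\<And>f g. f \<in> U_lin \<Longrightarrow> g \<in> U_lin \<Longrightarrow> \<beta> (ms_add f g) = \<beta> f + \<beta> g"
    and lin_scale: "\<And>c f. f \<in> U_lin \<Longrightarrow> \<beta> (ms_scale c f) = fps_const c * \<beta> f"
    and cont: "continuous_map (subtopology U_top U_lin) fps_top \<beta>"
    and f: "f \<in> U_lin"
  shows "ext (\<lambda>i. \<beta> (ee i)) f = \<beta> f"
proof (rule fps_ext)
  fix k
  let ?b = "\<lambda>i. \<beta> (ee i)"
  have fA: "f \<in> U_alg" using f by (rule U_lin_alg)
  have "((\<lambda>r. f r * Bp ?b r $ k) has_sum \<beta> f $ k) fsupp_seqs"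
    unfolding has_sum_def
  proof (rule tendstoI)
    fix \<epsilon> :: real assume \<epsilon>: "\<epsilon> > 0"
    obtain m e where me: "e > 0" "\<forall>g\<in>U_lin. qnorm m (\<lambda>r. g r - f r) < e \<longrightarrow> dist (\<beta> g $ k) (\<beta> f $ k) < \<epsilon>"
      using cont_eps[OF cont f \<epsilon>, of k] by blast
    define a where "a = (\<lambda>r. norm (f r) * real m ^ msize r)"
    have asum: "a summable_on fsupp_seqs" unfolding a_def using fA by (rule U_alg_summ)
    have "(sum a \<longlongrightarrow> infsum a fsupp_seqs) (finite_subsets_at_top fsupp_seqs)"
      using has_sum_infsum[OF asum] unfolding has_sum_def .
    then have ev1: "\<forall>\<^sub>F F in finite_subsets_at_top fsupp_seqs. dist (sum a F) (infsum a fsupp_seqs) < e"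
      using me(1) by (rule tendstoD)
    have ev2: "\<forall>\<^sub>F F in finite_subsets_at_top fsupp_seqs. finite F \<and> F \<subseteq> fsupp_seqs"
      by (rule eventually_finite_subsets_at_top_weakI) simp
    show "\<forall>\<^sub>F F in finite_subsets_at_top fsupp_seqs. dist (\<Sum>r\<in>F. f r * Bp ?b r $ k) (\<beta> f $ k) < \<epsilon>"
      using ev1 ev2
    proof eventually_elim
      case (elim F)
      then have F: "finite F" "F \<subseteq> fsupp_seqs" and d: "dist (sum a F) (infsum a fsupp_seqs) < e" by auto
      let ?fF = "\<lambda>r. if r \<in> F then f r else 0"
      have tl: "?fF \<in> U_lin" "\<beta> ?fF = (\<Sum>r\<in>F. fps_const (f r) * Bp ?b r)"
        using trunc_lin[OF lin_add lin_scale f F] by auto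
      have q1: "qnorm m (\<lambda>r. ?fF r - f r) = infsum a (fsupp_seqs - F)"
        unfolding qnorm_def a_def by (rule infsum_cong_neutral) auto
      have "infsum a fsupp_seqs = infsum a (F \<union> (fsupp_seqs - F))" proof -
        have "F \<union> (fsupp_seqs - F) = fsupp_seqs" using F(2) by blast
        then show ?thesis by simp
      qed
      also have "\<dots> = infsum a F + infsum a (fsupp_seqs - F)"
      proof -
        have "a summable_on (fsupp_seqs - F)" by (rule summable_on_subset_banach[OF asum]) auto
        then show ?thesis using F by (intro infsum_Un_disjoint) auto
      qed
      finally have "qnorm m (\<lambda>r. ?fF r - f r) = infsum a fsupp_seqs - sum a F" using q1 F by simp
      also have "\<dots> < e" using d by (simp add: dist_real_def)
      finally have qe: "qnorm m (\<lambda>r. ?fF r - f r) < e" .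
      have "dist (\<beta> ?fF $ k) (\<beta> f $ k) < \<epsilon>" by (rule me(2)[rule_format, OF tl(1) qe])
      moreover have "\<beta> ?fF $ k = (\<Sum>r\<in>F. f r * Bp ?b r $ k)" unfolding tl(2) by (simp add: fps_sum_nth)
      ultimately show ?case by simp
    qed
  qed
  then have "cf ?b f k = \<beta> f $ k" unfolding cf_def by (rule infsumI)
  then show "ext ?b f $ k = \<beta> f $ k" by simp
qed

theorem theorem5p8:
  fixes \<beta> :: "mseries \<Rightarrow> complex fps"
  assumes lin_add: "\<And>f g. f \<in> U_lin \<Longrightarrow> g \<in> U_lin \<Longrightarrow> \<beta> (ms_add f g) = \<beta> f + \<beta> g"
    and lin_scale: "\<And>c f. f \<in> U_lin \<Longrightarrow> \<beta> (ms_scale c f) = fps_const c * \<beta> f"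
    and cont: "continuous_map (subtopology U_top U_lin) fps_top \<beta>"
  shows "\<exists>\<beta>'. continuous_map U_top fps_top \<beta>' \<and>
           (\<forall>f\<in>U_alg. \<forall>g\<in>U_alg. \<beta>' (ms_add f g) = \<beta>' f + \<beta>' g) \<and>
           (\<forall>c. \<forall>f\<in>U_alg. \<beta>' (ms_scale c f) = fps_const c * \<beta>' f) \<and>
           (\<forall>f\<in>U_alg. \<forall>g\<in>U_alg. \<beta>' (ms_mult f g) = \<beta>' f * \<beta>' g) \<and>
           \<beta>' ms_one = 1 \<and>
           (\<forall>f\<in>U_lin. \<beta>' f = \<beta> f)"
proof -
  let ?b = "\<lambda>i. \<beta> (ee i)"
  obtain M where "\<forall>n i. norm (?b i $ n) \<le> M n" using beta_bound[OF lin_scale cont] by blast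
  then have gb: "good ?b" by (intro good_intro) blast
  show ?thesis
  proof (intro exI[of _ "ext ?b"] conjI ballI allI)
    show "continuous_map U_top fps_top (ext ?b)" by (rule ext_cont[OF gb])
    show "ext ?b (ms_add f g) = ext ?b f + ext ?b g" if "f \<in> U_alg" "g \<in> U_alg" for f g
      using ext_add[OF gb that] .
    show "ext ?b (ms_scale c f) = fps_const c * ext ?b f" for c f by (rule ext_scale)
    show "ext ?b (ms_mult f g) = ext ?b f * ext ?b g" if "f \<in> U_alg" "g \<in> U_alg" for f g
      using ext_mult[OF gb that] .
    show "ext ?b ms_one = 1" by (rule ext_one)
    show "ext ?b f = \<beta> f" if "f \<in> U_lin" for f
      by (rule ext_extends[OF lin_add lin_scale cont that])
  qed
qed

end
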